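(* Let $p\in\{3,4,\dots\}$, $a\ge0$, $b>0$ satisfy either ($a>0$ and $b\in[p/2-1,p/2]$) or ($a=0$ and $b\in[p/2-1,p/2)$). Let $l\in\{1,2\}$ and let $h:\mathbb{Z}^+\to\mathbb{R}$ satisfy $h(n)=O(n^{-l})$ as $n\to\infty$. For $y>0$ let $N\sim\mathrm{Poisson}(y/2)$. Then there exists $d\in(0,\infty)$ such that for every $k\in\{1,2,3\}$ and every $y>0$, $$\left|\frac{E[h(N)w_{k-1}(N)\mid y]}{E[w_{k-1}(N)\mid y]}\right|\le\frac{d}{y^l}.$$
   Context: $\mathbb{Z}^+=\{0,1,2,\dots\}$; $g_0(z)=(a+z)^{-b}$; for $n\in\mathbb{Z}^+$ and $k\in\{0,1,2,3\}$, $w_k(n)=\int_0^\infty\frac{g_0(z)(z/2)^{n+p/2+k-1}e^{-z/2}}{2\Gamma(n+p/2)}dz$. $E[\cdot\mid y]$ denotes expectation with $N\sim\mathrm{Poisson}(y/2)$. *)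

theory Defs
  imports "HOL-Analysis.Analysis" "HOL-Probability.Probability" "HOL-Library.Landau_Symbols"
begin

definition g0 :: "real \<Rightarrow> real \<Rightarrow> real \<Rightarrow> real" where
  "g0 a b z = (a + z) powr (- b)"

definition w :: "nat \<Rightarrow> real \<Rightarrow> real \<Rightarrow> nat \<Rightarrow> nat \<Rightarrow> real" where
  "w p a b k n = (\<integral>z\<in>{0<..}. g0 a b z * (z / 2) powr (real n + real p / 2 + real k - 1)
        * exp (- z / 2) / (2 * Gamma (real n + real p / 2)) \<partial>lborel)"

definition condE :: "(nat \<Rightarrow> real) \<Rightarrow> real \<Rightarrow> real" where
  "condE f y = measure_pmf.expectation (poisson_pmf (y / 2)) f"

end

theory Submission
  imports Defs
begin

definition ff :: "real \<Rightarrow> real \<Rightarrow> real \<Rightarrow> real \<Rightarrow> real" where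
  "ff a b s z = (a+z) powr (-b) * (z/2) powr s * exp(-z/2)"
definition fb :: "real \<Rightarrow> real \<Rightarrow> real \<Rightarrow> real \<Rightarrow> real" where
  "fb a b s z = (a+z) powr (-b-1) * (z/2) powr s * exp(-z/2)"
definition II :: "real \<Rightarrow> real \<Rightarrow> real \<Rightarrow> real" where
  "II a b s = (LINT z:{0<..}|lborel. ff a b s z)"

lemma G_int:
  assumes "s > -1"
  shows "set_integrable lborel {0<..} (\<lambda>z::real. (z/2) powr s * exp(-z/2))"
proof -
  have "((\<lambda>t. t powr s / exp t) has_integral Gamma (s+1)) {0..}"
    using Gamma_integral_real[of "s+1"] assms by simp
  hence "(\<lambda>t. t powr s / exp t) integrable_on {0..}" by blast
  hence "(\<lambda>t. t powr s / exp t) absolutely_integrable_on {0..}"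
    by (subst absolutely_integrable_on_iff_nonneg) auto
  hence "integrable lborel (\<lambda>t::real. indicator {0..} t *\<^sub>R (t powr s / exp t))"
    unfolding set_integrable_def by (subst (asm) integrable_completion) auto
  from lborel_integrable_real_affine[OF this, of "1/2" 0]
  have "integrable lborel (\<lambda>x::real. indicator {0..} (x/2) *\<^sub>R ((x/2) powr s / exp (x/2)))"
    by simp
  moreover have "\<And>x::real. indicator {0..} (x/2) *\<^sub>R ((x/2) powr s / exp (x/2)) = indicator {0..} x *\<^sub>R ((x/2) powr s * exp (-x/2))"
    by (auto simp: indicator_def exp_minus field_simps)
  ultimately have "set_integrable lborel {0..} (\<lambda>x::real. (x/2) powr s * exp (-x/2))"
    unfolding set_integrable_def by simp
  thus ?thesis by (rule set_integrable_subset) auto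
qed

lemma meas_cont:
  fixes f :: "real \<Rightarrow> real"
  shows "continuous_on {0<..} f \<Longrightarrow> set_borel_measurable lborel {0<..} f"
  using set_measurable_continuous_on[of "{0<..}" f] by (simp add: set_borel_measurable_def)

lemma ff_cont: "a \<ge> 0 \<Longrightarrow> continuous_on {0<..} (ff a b s)"
  unfolding ff_def by (intro continuous_intros) auto

lemma fb_cont: "a \<ge> 0 \<Longrightarrow> continuous_on {0<..} (fb a b s)"
  unfolding fb_def by (intro continuous_intros) auto

lemma ff_pos: "a \<ge> 0 \<Longrightarrow> z > 0 \<Longrightarrow> ff a b s z > 0"
  unfolding ff_def by auto

lemma fb_nonneg: "a \<ge> 0 \<Longrightarrow> z > 0 \<Longrightarrow> fb a b s z \<ge> 0"
  unfolding fb_def by auto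

lemma ff_int:
  assumes "a \<ge> 0" "b > 0" "s > -1" "a = 0 \<Longrightarrow> s - b > -1"
  shows "set_integrable lborel {0<..} (ff a b s)"
proof (cases "a = 0")
  case True
  have eq: "ff a b s z = 2 powr (-b) * ((z/2) powr (s-b) * exp(-z/2))" if "z > 0" for z
  proof -
    have "z powr (-b) = 2 powr (-b) * (z/2) powr (-b)"
      using that by (subst powr_mult[symmetric]) auto
    moreover have "(z/2) powr (s-b) = (z/2) powr s * (z/2) powr (-b)"
      by (simp add: powr_add[symmetric])
    ultimately show ?thesis using that True by (simp add: ff_def)
  qed
  have "set_integrable lborel {0<..} (\<lambda>z. 2 powr (-b) * ((z/2) powr (s-b) * exp(-z/2)))"
    using G_int[of "s-b"] assms True by auto
  thus ?thesis by (rule set_integrable_cong[THEN iffD1, rotated -1]) (auto simp: eq)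
next
  case False
  hence apos: "a > 0" using assms by auto
  show ?thesis
  proof (rule set_integrable_bound[OF _ meas_cont[OF ff_cont[OF assms(1)]]])
    show "set_integrable lborel {0<..} (\<lambda>z. a powr (-b) * ((z/2) powr s * exp(-z/2)))"
      using G_int[OF assms(3)] by auto
    show "AE x in lborel. x \<in> {0<..} \<longrightarrow> norm (ff a b s x) \<le> norm (a powr (-b) * ((x/2) powr s * exp(-x/2)))"
    proof (rule AE_I2, rule impI)
      fix x :: real assume "x \<in> {0<..}"
      hence x: "x > 0" by auto
      have "(a+x) powr (-b) \<le> a powr (-b)"
        using apos x assms by (intro powr_mono2') auto
      thus "norm (ff a b s x) \<le> norm (a powr (-b) * ((x/2) powr s * exp(-x/2)))"
        using x apos by (auto simp: ff_def abs_mult intro!: mult_right_mono)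
    qed
  qed
qed


lemma II_pos:
  assumes int: "set_integrable lborel {0<..} (ff a b s)" and a: "a \<ge> 0"
  shows "II a b s > 0"
proof -
  have int': "integrable lborel (\<lambda>x. indicator {0<..} x *\<^sub>R ff a b s x)"
    using int by (simp add: set_integrable_def)
  have nn: "AE x in lborel. 0 \<le> indicator {0<..} x *\<^sub>R ff a b s x"
    using ff_pos[OF a] by (intro AE_I2) (auto simp: indicator_def less_imp_le)
  have "II a b s \<ge> 0"
    unfolding II_def set_lebesgue_integral_def using nn by (rule integral_nonneg_AE)
  moreover have "II a b s \<noteq> 0"
  proof
    assume "II a b s = 0"
    hence "AE x in lborel. indicator {0<..} x *\<^sub>R ff a b s x = 0"
      using integral_nonneg_eq_0_iff_AE[OF int' nn] by (simp add: II_def set_lebesgue_integral_def)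
    hence "AE x in lborel. x \<notin> {0<..<1::real}"
      by eventually_elim (use ff_pos[OF a, of _ b s] in \<open>fastforce simp: indicator_def split: if_splits\<close>)
    hence "emeasure lborel {0<..<1::real} = 0"
      by (subst (asm) AE_iff_measurable[OF _ refl]) (auto simp: greaterThanLessThan_def greaterThan_def lessThan_def Collect_conj_eq[symmetric])
    thus False by simp
  qed
  ultimately show ?thesis by linarith
qed

lemma ff_deriv:
  fixes a b m x :: real
  assumes "a \<ge> 0" "x > 0"
  shows "(ff a b m has_real_derivative
     (-b * fb a b m x + (m/2) * ff a b (m-1) x - (1/2) * ff a b m x)) (at x)"
  unfolding ff_def fb_def using assms
  apply -
  apply (rule derivative_eq_intros refl | simp)+
  apply (simp add: field_simps)
  done

lemma II_rec:
  assumes a: "a \<ge> 0" and b: "b > 0" and m: "m > 0" "m - 1 > -1" "a = 0 \<Longrightarrow> m - 1 - b > -1"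
  shows "(m - b) * II a b (m-1) \<le> II a b m"
proof -
  have int1: "set_integrable lborel {0<..} (ff a b (m-1))"
    using ff_int[OF a b m(2)] m(3) by auto
  have int2: "set_integrable lborel {0<..} (ff a b m)"
    using ff_int[OF a b, of m] m by fastforce
  have fb_le: "fb a b m x \<le> ff a b (m-1) x / 2" if x: "x > 0" for x
  proof -
    have e1: "(a+x) powr (-b-1) = (a+x) powr (-b) / (a+x)"
      using x a by (simp add: powr_diff)
    have e2: "(x/2) powr m = (x/2) powr (m-1) * (x/2)"
      using x by (simp add: powr_diff)
    have "fb a b m x = ff a b (m-1) x * ((x/2) / (a+x))"
      unfolding fb_def ff_def e1 e2 by (simp add: algebra_simps)
    also have "\<dots> \<le> ff a b (m-1) x * (1/2)"
      using x a ff_pos[OF a x, of b "m-1"]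
      by (intro mult_left_mono) (auto simp: field_simps)
    finally show ?thesis by simp
  qed
  have int3: "set_integrable lborel {0<..} (fb a b m)"
  proof (rule set_integrable_bound[OF _ meas_cont[OF fb_cont[OF a]]])
    show "set_integrable lborel {0<..} (\<lambda>x. ff a b (m-1) x / 2)"
      using int1 by auto
    show "AE x in lborel. x \<in> {0<..} \<longrightarrow> norm (fb a b m x) \<le> norm (ff a b (m-1) x / 2)"
      using fb_le fb_nonneg[OF a] by (intro AE_I2) (force intro: order_trans[OF _ abs_ge_self])
  qed
  define Fp where "Fp x = -b * fb a b m x + (m/2) * ff a b (m-1) x - (1/2) * ff a b m x" for x
  have intF: "set_integrable lborel {0<..} Fp"
    unfolding Fp_def using int1 int2 int3 by (intro set_integral_diff set_integral_add set_integrable_mult_right)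
  have "(LBINT x=ereal 0..\<infinity>. Fp x) = 0 - 0"
  proof (rule interval_integral_FTC_integrable[where F = "ff a b m"])
    show "ereal 0 < \<infinity>" by simp
    fix x assume "ereal 0 < ereal x" "ereal x < \<infinity>"
    hence x: "x > 0" by simp
    show "(ff a b m has_vector_derivative Fp x) (at x)"
      using ff_deriv[OF a x] unfolding Fp_def
      by (simp add: has_real_derivative_iff_has_vector_derivative)
    have "continuous_on {0<..} Fp"
      unfolding Fp_def using ff_cont[OF a] fb_cont[OF a] by (intro continuous_intros) auto
    thus "isCont Fp x"
      using x by (simp add: continuous_on_eq_continuous_at)
  next
    show "set_integrable lborel (einterval (ereal 0) \<infinity>) Fp"
      using intF by (simp add: einterval_def greaterThan_def)
  next
    show "((ff a b m \<circ> real_of_ereal) \<longlongrightarrow> 0) (at_right (ereal 0))"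
      unfolding ereal_tendsto_simps ff_def
    proof (cases "a = 0")
      case True
      have "m > b" using m True by auto
      hence "((\<lambda>z::real. (0+z) powr (-b) * (z/2) powr m * exp(-z/2)) \<longlongrightarrow> 0) (at_right 0)"
        by real_asymp
      thus "((\<lambda>z::real. (a+z) powr (-b) * (z/2) powr m * exp(-z/2)) \<longlongrightarrow> 0) (at_right 0)"
        using True by simp
    next
      case False
      hence "a > 0" using a by auto
      thus "((\<lambda>z::real. (a+z) powr (-b) * (z/2) powr m * exp(-z/2)) \<longlongrightarrow> 0) (at_right 0)"
        using m by real_asymp
    qed
  next
    show "((ff a b m \<circ> real_of_ereal) \<longlongrightarrow> 0) (at_left \<infinity>)"
      unfolding ereal_tendsto_simps ff_def using a b by real_asymp
  qed
  hence "(LINT x:{0<..}|lborel. Fp x) = 0"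
    by (simp add: interval_integral_to_infinity_eq)
  hence eq: "-b * (LINT x:{0<..}|lborel. fb a b m x) + (m/2) * II a b (m-1) - (1/2) * II a b m = 0"
    unfolding Fp_def II_def using int1 int2 int3
    by (subst (asm) set_integral_diff set_integral_add, auto)+
  have "(LINT x:{0<..}|lborel. fb a b m x) \<le> (LINT x:{0<..}|lborel. ff a b (m-1) x / 2)"
    using int1 int3 fb_le by (intro set_integral_mono) auto
  hence "(LINT x:{0<..}|lborel. fb a b m x) \<le> II a b (m-1) / 2"
    by (simp add: II_def)
  thus ?thesis using eq b by (simp add: algebra_simps)
qed


lemma w_eq: "w p a b kk n = II a b (real n + real p / 2 + real kk - 1) / (2 * Gamma (real n + real p / 2))"
  unfolding w_def II_def ff_def g0_def by simp

lemma W_step: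
  fixes p :: nat and a b :: real
  assumes "p \<ge> 3" and a: "a \<ge> 0" and b: "b > 0"
    and cond: "(a > 0 \<and> real p / 2 - 1 \<le> b \<and> b \<le> real p / 2) \<or>
         (a = 0 \<and> real p / 2 - 1 \<le> b \<and> b < real p / 2)"
  shows "\<exists>K\<ge>1. \<forall>n. w p a b kk n \<ge> 0 \<and> w p a b kk n \<le> K * w p a b kk (Suc n)"
proof -
  define s where "s n = real n + real p / 2 + real kk - 1" for n :: nat
  define W where "W n = w p a b kk n" for n
  have p: "real p \<ge> 3" using assms by simp
  have adm: "s n > -1" "a = 0 \<Longrightarrow> s n - b > -1" for n
    using p cond unfolding s_def by auto
  have int: "set_integrable lborel {0<..} (ff a b (s n))" for n
    using ff_int[OF a b adm] .
  have Gpos: "Gamma (real n + real p / 2) > 0" for n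
    using p by (intro Gamma_real_pos) auto
  have Wdef: "W n = II a b (s n) / (2 * Gamma (real n + real p / 2))" for n
    unfolding W_def s_def w_eq ..
  have Wpos: "W n > 0" for n
    unfolding Wdef using II_pos[OF int a] Gpos by simp
  have sS: "s (Suc n) = s n + 1" for n unfolding s_def by simp
  have GS: "Gamma (real (Suc n) + real p / 2) = (real n + real p / 2) * Gamma (real n + real p / 2)" for n
  proof -
    have "real (Suc n) + real p / 2 = (real n + real p / 2) + 1" by simp
    moreover have "real n + real p / 2 \<notin> \<int>\<^sub>\<le>\<^sub>0"
      using p nonpos_Ints_nonpos[of "real n + real p / 2"] by auto
    ultimately show ?thesis using Gamma_plus1[of "real n + real p / 2"] by (simp add: add_ac)
  qed
  have rec: "(s n + 1 - b) * II a b (s n) \<le> II a b (s (Suc n))" for n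
    using II_rec[OF a b, of "s n + 1"] adm[of n] sS[of n] by (auto simp: algebra_simps)
  have stepn: "W n \<le> (1 + real p / 2) * W (Suc n)" if n: "n \<ge> 1" for n
  proof -
    have "s n + 1 - b \<ge> real n" using cond unfolding s_def by auto
    hence "real n * II a b (s n) \<le> II a b (s (Suc n))"
      using rec[of n] II_pos[OF int a, of n] by (smt (verit) mult_right_mono)
    hence I: "II a b (s n) \<le> II a b (s (Suc n)) / real n"
      using n by (simp add: field_simps)
    have "W n \<le> II a b (s (Suc n)) / real n / (2 * Gamma (real n + real p / 2))"
      unfolding Wdef using I Gpos[of n] by (intro divide_right_mono) auto
    also have "\<dots> = ((real n + real p / 2) / real n) * W (Suc n)"
    proof -
      have aux: "I / r / (2 * G) = (q / r) * (I / (2 * (q * G)))" if "q > 0" "G > 0" "r > 0" for I r q G :: real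
        using that by (simp add: field_simps)
      show ?thesis unfolding Wdef GS
        by (rule aux) (use Gpos[of n] n p in auto)
    qed
    also have "\<dots> \<le> (1 + real p / 2) * W (Suc n)"
    proof (rule mult_right_mono)
      show "(real n + real p / 2) / real n \<le> 1 + real p / 2"
        using n p by (simp add: field_simps)
    qed (use Wpos[of "Suc n"] in auto)
    finally show ?thesis .
  qed
  define K where "K = max (1 + real p / 2) (W 0 / W 1)"
  have "K \<ge> 1" unfolding K_def by auto
  moreover have "W n \<le> K * W (Suc n)" for n
  proof (cases "n = 0")
    case True
    have "W 0 = (W 0 / W 1) * W 1" using Wpos[of 1] by simp
    also have "\<dots> \<le> K * W 1" using Wpos[of 1] unfolding K_def by (intro mult_right_mono) auto
    finally show ?thesis using True by simp
  next
    case False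
    hence "W n \<le> (1 + real p / 2) * W (Suc n)" by (intro stepn) auto
    also have "\<dots> \<le> K * W (Suc n)" using Wpos[of "Suc n"] unfolding K_def by (intro mult_right_mono) auto
    finally show ?thesis .
  qed
  ultimately show ?thesis using Wpos unfolding W_def by (metis less_imp_le)
qed


lemma h_bound:
  fixes h :: "nat \<Rightarrow> real" and l :: nat
  assumes "h \<in> O(\<lambda>n. 1 / real n ^ l)"
  shows "\<exists>C>0. \<forall>n. \<bar>h n\<bar> \<le> C / (real n + 1) ^ l"
proof -
  obtain c where c: "c > 0" "eventually (\<lambda>n. norm (h n) \<le> c * norm (1 / real n ^ l)) at_top"
    using assms by (elim landau_o.bigE)
  then obtain N where N: "\<And>n. n \<ge> N \<Longrightarrow> \<bar>h n\<bar> \<le> c * \<bar>1 / real n ^ l\<bar>"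
    by (auto simp: eventually_at_top_linorder)
  define M where "M = (\<Sum>n<N+1. \<bar>h n\<bar> * (real n + 1) ^ l)"
  define C where "C = c * 2 ^ l + M + 1"
  have M: "M \<ge> 0" unfolding M_def by (intro sum_nonneg) auto
  have "\<bar>h n\<bar> \<le> C / (real n + 1) ^ l" for n
  proof (cases "n \<le> N")
    case True
    have "\<bar>h n\<bar> * (real n + 1) ^ l \<le> M"
      unfolding M_def using True
      by (intro member_le_sum) auto
    also have "\<dots> \<le> C" unfolding C_def using c by auto
    finally show ?thesis by (simp add: field_simps)
  next
    case False
    hence n: "n \<ge> N" "n \<ge> 1" by auto
    have "\<bar>h n\<bar> \<le> c * (1 / real n ^ l)" using N[OF n(1)] by simp
    also have "\<dots> \<le> c * (2 ^ l / (real n + 1) ^ l)"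
    proof (intro mult_left_mono)
      have "(real n + 1) ^ l \<le> (2 * real n) ^ l"
        using n by (intro power_mono) auto
      thus "1 / real n ^ l \<le> 2 ^ l / (real n + 1) ^ l"
        using n by (simp add: field_simps power_mult_distrib)
    qed (use c in auto)
    also have "\<dots> = (c * 2 ^ l) / (real n + 1) ^ l" by simp
    also have "\<dots> \<le> C / (real n + 1) ^ l"
      unfolding C_def using M by (intro divide_right_mono) auto
    finally show ?thesis by simp
  qed
  moreover have "C > 0" unfolding C_def using c(1) M
    by (smt (verit) mult_pos_pos zero_less_power)
  ultimately show ?thesis by blast
qed

lemma pmf_sums:
  fixes p :: "nat pmf" and f :: "nat \<Rightarrow> real"
  assumes "integrable (measure_pmf p) f"
  shows "(\<lambda>n. pmf p n * f n) sums measure_pmf.expectation p f"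
proof -
  have "integrable (count_space UNIV) (\<lambda>n. pmf p n *\<^sub>R f n)"
    using assms unfolding measure_pmf_eq_density by (subst (asm) integrable_density) auto
  from sums_integral_count_space_nat[OF this]
  show ?thesis unfolding measure_pmf_eq_density by (subst integral_density) auto
qed


lemma aux1: fixes X r :: real assumes "X \<ge> 0" "r \<ge> 0" shows "X / (r+1)^2 \<le> 2 * (X / ((r+1)*(r+2)))"
proof -
  have "1/(r+1)^2 \<le> 2 / ((r+1)*(r+2))" using assms by (simp add: divide_simps power2_eq_square) 
  hence "X * (1/(r+1)^2) \<le> X * (2 / ((r+1)*(r+2)))" using assms by (intro mult_left_mono) auto
  thus ?thesis by (simp add: algebra_simps)
qed

lemma aux2: fixes Q R d V mu :: real assumes "Q = R * mu^2 / d" "d > 0" "mu > 0"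
  shows "R * V / d = Q * V / mu^2"
  using assms by (simp add: field_simps)

lemma aux3: fixes Q R r V mu :: real assumes "Q = R * mu / r" "r > 0" "mu > 0"
  shows "R * V / r = Q * V / mu"
  using assms by (simp add: field_simps)

lemma main_fixed:
  fixes W h :: "nat \<Rightarrow> real" and K C y :: real and l :: nat
  assumes Wnn: "\<And>n. W n \<ge> 0" and Wst: "\<And>n. W n \<le> K * W (Suc n)" and K: "K \<ge> 1"
    and C: "C > 0" and hb: "\<And>n. \<bar>h n\<bar> \<le> C / (real n + 1) ^ l" and l: "l \<in> {1, 2}"
    and y: "y > 0"
  shows "\<bar>condE (\<lambda>n. h n * W n) y / condE W y\<bar> \<le> 8 * C * K ^ 2 / y ^ l"
proof -
  define \<mu> where "\<mu> = y / 2"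
  have mu: "\<mu> > 0" using y by (simp add: \<mu>_def)
  define P where "P n = pmf (poisson_pmf \<mu>) n" for n
  have P: "P n = \<mu> ^ n / fact n * exp (- \<mu>)" for n
    unfolding P_def using pmf_poisson[OF mu] .
  have Pnn: "P n \<ge> 0" for n unfolding P_def by simp
  have PS: "P (Suc n) = P n * \<mu> / (real n + 1)" for n
    unfolding P by (simp add: field_simps)
  have RHSnn: "8 * C * K ^ 2 / y ^ l \<ge> 0" using C y by auto
  show ?thesis
  proof (cases "integrable (measure_pmf (poisson_pmf \<mu>)) W")
    case False
    hence "condE W y = 0" unfolding condE_def \<mu>_def by (simp add: not_integrable_integral_eq)
    thus ?thesis using RHSnn by simp
  next
    case True
    define S where "S = condE W y"
    define N where "N = condE (\<lambda>n. h n * W n) y"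
    have hC: "\<bar>h n\<bar> \<le> C" for n
    proof -
      have "C / (real n + 1) ^ l \<le> C / 1"
        using C by (intro divide_left_mono) (auto simp: one_le_power)
      thus ?thesis using hb[of n] by simp
    qed
    have int2: "integrable (measure_pmf (poisson_pmf \<mu>)) (\<lambda>n. h n * W n)"
    proof (rule Bochner_Integration.integrable_bound)
      show "integrable (measure_pmf (poisson_pmf \<mu>)) (\<lambda>n. C * W n)"
        using True by simp
      show "AE n in measure_pmf (poisson_pmf \<mu>). norm (h n * W n) \<le> norm (C * W n)"
        using hC Wnn C by (intro AE_I2) (auto simp: abs_mult intro!: mult_right_mono)
    qed simp
    define u where "u n = P n * W n" for n
    have uS: "u sums S"
      using pmf_sums[OF True] unfolding u_def P_def S_def condE_def \<mu>_def .
    have unn: "u n \<ge> 0" for n unfolding u_def using Pnn Wnn by simp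
    have Snn: "S \<ge> 0" using uS unn sums_iff suminf_nonneg by metis
    have tN: "(\<lambda>n. P n * (h n * W n)) sums N"
      using pmf_sums[OF int2] unfolding P_def N_def condE_def \<mu>_def .
    define c where "c = (if l = 1 then K / \<mu> else 2 * K ^ 2 / \<mu> ^ 2)"
    have vle: "P n * W n / (real n + 1) ^ l \<le> c * u (n + l)" for n
    proof (cases "l = 1")
      case True
      have "P n * W n / (real n + 1) ^ l = P (Suc n) * W n / \<mu>"
        using True by (simp add: aux3[OF PS _ mu])
      also have "\<dots> \<le> P (Suc n) * (K * W (Suc n)) / \<mu>"
        using mu Pnn Wst by (intro divide_right_mono mult_left_mono) auto
      also have "\<dots> = c * u (n + l)" using True unfolding c_def u_def by simp
      finally show ?thesis .
    next
      case False
      hence l2: "l = 2" using l by auto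
      have "P n * W n / (real n + 1) ^ l \<le> 2 * (P n * W n / ((real n + 1) * (real n + 2)))"
        using l2 aux1[of "P n * W n" "real n"] Pnn[of n] Wnn[of n] by simp
      also have "\<dots> = 2 * (P (Suc (Suc n)) * W n / \<mu>^2)"
      proof -
        have "P (Suc (Suc n)) = P n * \<mu>^2 / ((real n + 1) * (real n + 2))"
          unfolding PS by (simp add: power2_eq_square add_ac)
        thus ?thesis using aux2[of _ "P n" \<mu> "(real n + 1) * (real n + 2)" "W n"] mu by simp
      qed
      also have "\<dots> \<le> 2 * (P (Suc (Suc n)) * (K^2 * W (Suc (Suc n))) / \<mu>^2)"
      proof -
        have "W n \<le> K * W (Suc n)" by (rule Wst)
        also have "\<dots> \<le> K * (K * W (Suc (Suc n)))" using K Wst by (intro mult_left_mono) auto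
        finally have "W n \<le> K^2 * W (Suc (Suc n))" by (simp add: power2_eq_square)
        thus ?thesis using mu Pnn by (intro mult_left_mono divide_right_mono) auto
      qed
      also have "\<dots> = c * u (n + l)" using l2 unfolding c_def u_def by simp
      finally show ?thesis .
    qed
    have cnn: "c \<ge> 0" unfolding c_def using K mu by auto
    have sumsh: "summable (\<lambda>n. u (n + l))"
      using uS by (intro summable_ignore_initial_segment) (auto simp: sums_iff)
    have shift_le: "(\<Sum>n. u (n + l)) \<le> S"
      using uS unn by (subst suminf_minus_initial_segment) (auto simp: sums_iff intro: sum_nonneg)
    have bnd: "\<bar>P n * (h n * W n)\<bar> \<le> C * c * u (n + l)" for n
    proof -
      have "\<bar>P n * (h n * W n)\<bar> = \<bar>h n\<bar> * (P n * W n)" using Pnn Wnn by (simp add: abs_mult)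
      also have "\<dots> \<le> C / (real n + 1) ^ l * (P n * W n)"
        using hb Pnn Wnn by (intro mult_right_mono) auto
      also have "\<dots> = C * (P n * W n / (real n + 1) ^ l)" by simp
      also have "\<dots> \<le> C * (c * u (n + l))" using C vle by (intro mult_left_mono) auto
      finally show ?thesis by simp
    qed
    have sumsg: "summable (\<lambda>n. C * c * u (n + l))" using sumsh by (rule summable_mult)
    have "N \<le> (\<Sum>n. C * c * u (n + l))"
      using tN sumsg bnd by (intro sums_le[OF _ tN summable_sums[OF sumsg]]) (auto simp: abs_le_iff)
    moreover have "-N \<le> (\<Sum>n. C * c * u (n + l))"
      using tN sumsg bnd by (intro sums_le[OF _ sums_minus[OF tN] summable_sums[OF sumsg]]) (auto simp: abs_le_iff)
    ultimately have "\<bar>N\<bar> \<le> C * c * (\<Sum>n. u (n + l))"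
      using sumsh by (simp add: suminf_mult)
    also have "\<dots> \<le> C * c * S" using shift_le C cnn by (intro mult_left_mono) auto
    finally have Nb: "\<bar>N\<bar> \<le> C * c * S" .
    have cb: "c \<le> 8 * K ^ 2 / y ^ l"
    proof (cases "l = 1")
      case True
      have "K / \<mu> = 2 * K / y" unfolding \<mu>_def by simp
      also have "\<dots> \<le> 8 * K ^ 2 / y" using K y by (intro divide_right_mono) (auto simp: power2_eq_square)
      finally show ?thesis using True unfolding c_def by simp
    next
      case False
      hence "l = 2" using l by auto
      thus ?thesis unfolding c_def \<mu>_def using y by (simp add: field_simps power2_eq_square)
    qed
    show ?thesis
    proof (cases "S = 0")
      case True thus ?thesis using RHSnn unfolding S_def by simp
    next
      case False
      hence Sp: "S > 0" using Snn by simp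
      have "\<bar>N / S\<bar> = \<bar>N\<bar> / S" using Sp by simp
      also have "\<dots> \<le> C * c" using Nb Sp by (simp add: field_simps)
      also have "\<dots> \<le> C * (8 * K ^ 2 / y ^ l)" using cb C by (intro mult_left_mono) auto
      finally show ?thesis unfolding N_def S_def by (simp add: mult_ac)
    qed
  qed
qed


theorem propositionA6:
  fixes p :: nat and a b :: real and l :: nat and h :: "nat \<Rightarrow> real"
  assumes "p \<ge> 3" and "a \<ge> 0" and "b > 0"
    and "(a > 0 \<and> real p / 2 - 1 \<le> b \<and> b \<le> real p / 2) \<or>
         (a = 0 \<and> real p / 2 - 1 \<le> b \<and> b < real p / 2)"
    and "l \<in> {1, 2}"
    and "h \<in> O(\<lambda>n. 1 / real n ^ l)"
  shows "\<exists>d::real. 0 < d \<and> (\<forall>k \<in> {1, 2, 3::nat}. \<forall>y::real. y > 0 \<longrightarrow>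
           \<bar>condE (\<lambda>n. h n * w p a b (k - 1) n) y / condE (w p a b (k - 1)) y\<bar> \<le> d / y ^ l)"
proof -
  obtain C where C: "C > 0" "\<And>n. \<bar>h n\<bar> \<le> C / (real n + 1) ^ l"
    using h_bound[OF assms(6)] by blast
  have "\<forall>kk. \<exists>K\<ge>1. \<forall>n. w p a b kk n \<ge> 0 \<and> w p a b kk n \<le> K * w p a b kk (Suc n)"
    using W_step[OF assms(1-4)] by blast
  then obtain Kf where Kf: "\<And>kk. Kf kk \<ge> 1 \<and> (\<forall>n. w p a b kk n \<ge> 0 \<and> w p a b kk n \<le> Kf kk * w p a b kk (Suc n))"
    by metis
  define d where "d = 8 * C * ((Kf 0)^2 + (Kf 1)^2 + (Kf 2)^2)"
  show ?thesis
  proof (intro exI[of _ d] conjI ballI allI impI)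
    show "0 < d" unfolding d_def using C(1) Kf[of 0] Kf[of 1] Kf[of 2]
      by (intro mult_pos_pos) (auto intro: add_pos_pos add_nonneg_pos)
  next
    fix k :: nat and y :: real assume k: "k \<in> {1, 2, 3}" and y: "y > 0"
    have "\<bar>condE (\<lambda>n. h n * w p a b (k - 1) n) y / condE (w p a b (k - 1)) y\<bar>
          \<le> 8 * C * (Kf (k-1)) ^ 2 / y ^ l"
      using Kf[of "k-1"] by (intro main_fixed[OF _ _ _ C(1) C(2) assms(5) y]) auto
    also have "\<dots> \<le> d / y ^ l"
    proof (intro divide_right_mono)
      have "(Kf (k-1))^2 \<le> (Kf 0)^2 + (Kf 1)^2 + (Kf 2)^2"
        using k by (auto simp: zero_le_power2)
      thus "8 * C * (Kf (k-1)) ^ 2 \<le> d" unfolding d_def using C(1) by (intro mult_left_mono) auto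
    qed (use y in auto)
    finally show "\<bar>condE (\<lambda>n. h n * w p a b (k - 1) n) y / condE (w p a b (k - 1)) y\<bar> \<le> d / y ^ l" .
  qed
qed

end
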